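(* Let $\mathcal R$ be a connected non-compact Riemann surface with universal cover $\widetilde{\mathcal R}$ and deck group $\pi_1(\mathcal R)$. Let $\eta$ be a holomorphic one-form on $\widetilde{\mathcal R}$ with values in the Lie algebra of $\Lambda\mathrm{SL}_2\mathbb C_\sigma$ (holomorphic also in $\lambda\in\mathbb C^*$) invariant under $\pi_1(\mathcal R)$, and let $C$ solve $dC=C\eta$ with $C(z_0,\lambda)\in\Lambda\mathrm{SL}_2\mathbb C_\sigma$, so that $C(\tau.z,\lambda)=\rho(\tau,\lambda)C(z,\lambda)$ for a homomorphism $\rho(\cdot,\lambda):\pi_1(\mathcal R)\to\Lambda\mathrm{SL}_2\mathbb C_\sigma$. Assume $\rho(\tau,\cdot)\in\Lambda\mathrm{SU}_{1,1\sigma}$ for all $\tau$. Then: (1) every $\tau\in\pi_1(\mathcal R)$ maps $\mathcal I_e$ onto itself and $\mathcal I_\omega$ onto itself; (2) for $z\in\mathcal I_e$, with the normalized Iwasawa decomposition $C=FV_+$, one has $F(\tau.z,\overline{\tau.z},\lambda)=\rho(\tau,\lambda)F(z,\bar z,\lambda)$; (3) for $z\in\mathcal I_\omega$, with the normalized decomposition $C=\tilde F\omega_0\tilde V_+$, one has $\tilde F(\tau.z,\overline{\tau.z},\lambda)\,\omega_0=\rho(\tau,\lambda)\,\tilde F(z,\bar z,\lambda)\,\omega_0$.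
   Context: $\sigma_3=\mathrm{diag}(1,-1)$. $\Lambda\mathrm{SL}_2\mathbb C_\sigma$: loops $g:\mathbb S^1\to\mathrm{SL}_2\mathbb C$ with $g(-\lambda)=\sigma_3g(\lambda)\sigma_3$; $\Lambda^+\mathrm{SL}_2\mathbb C_\sigma$: those extending holomorphically to $|\lambda|<1$; $\Lambda\mathrm{SU}_{1,1\sigma}$: those with $\sigma_3({}^t\overline{g(1/\bar\lambda)})^{-1}\sigma_3=g(\lambda)$. Let $\omega_0=\begin{pmatrix}0&\lambda\\-\lambda^{-1}&0\end{pmatrix}$. The Iwasawa cells are $\mathcal I_e=\{z: C(z,\cdot)\in\Lambda\mathrm{SU}_{1,1\sigma}\cdot\Lambda^+\mathrm{SL}_2\mathbb C_\sigma\}$ and $\mathcal I_\omega=\{z:C(z,\cdot)\in\Lambda\mathrm{SU}_{1,1\sigma}\cdot\omega_0\cdot\Lambda^+\mathrm{SL}_2\mathbb C_\sigma\}$. On $\mathcal I_e$ the decomposition $C=FV_+$ ($F\in\Lambda\mathrm{SU}_{1,1\sigma}$, $V_+\in\Lambda^+\mathrm{SL}_2\mathbb C_\sigma$) is made unique by requiring the diagonal of $V_+(\lambda=0)$ to be positive; likewise $C=\tilde F\omega_0\tilde V_+$ on $\mathcal I_\omega$ with $\tilde V_+(\lambda=0)$ having positive diagonal. *)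

theory Defs
  imports "HOL-Analysis.Analysis"
begin

type_synonym mat2 = "complex^2^2"

definition mk2 :: "complex \<Rightarrow> complex \<Rightarrow> complex \<Rightarrow> complex \<Rightarrow> mat2" where
  "mk2 a b c d = vector [vector [a, b], vector [c, d]]"

definition sigma3 :: mat2 where "sigma3 = mk2 1 0 0 (-1)"

definition omega0 :: "complex \<Rightarrow> mat2" where "omega0 lam = mk2 0 lam (- inverse lam) 0"

definition mconj :: "mat2 \<Rightarrow> mat2" where "mconj A = (\<chi> i j. cnj (A $ i $ j))"

definition unit_circle :: "complex set" where "unit_circle = sphere 0 1"

text \<open>Loops are maps on the unit circle (values off the circle are irrelevant).
  Twisted loop group Lambda SL_2(C)_sigma (continuous loops).\<close>
definition LSL :: "(complex \<Rightarrow> mat2) \<Rightarrow> bool" where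
  "LSL g \<longleftrightarrow> continuous_on unit_circle g \<and>
     (\<forall>lam\<in>unit_circle. det (g lam) = 1 \<and> g (- lam) = sigma3 ** g lam ** sigma3)"

definition plus_ext :: "(complex \<Rightarrow> mat2) \<Rightarrow> (complex \<Rightarrow> mat2) \<Rightarrow> bool" where
  "plus_ext g h \<longleftrightarrow> continuous_on (cball 0 1) h \<and>
     (\<forall>i j. (\<lambda>mu. h mu $ i $ j) holomorphic_on ball 0 1) \<and>
     (\<forall>lam\<in>unit_circle. h lam = g lam)"

definition LSL_plus :: "(complex \<Rightarrow> mat2) \<Rightarrow> bool" where
  "LSL_plus g \<longleftrightarrow> LSL g \<and> (\<exists>h. plus_ext g h)"

definition LSL_plus_normalized :: "(complex \<Rightarrow> mat2) \<Rightarrow> bool" where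
  "LSL_plus_normalized g \<longleftrightarrow> LSL g \<and>
     (\<exists>h. plus_ext g h \<and> h 0 $ 1 $ 1 \<in> \<real> \<and> Re (h 0 $ 1 $ 1) > 0
                     \<and> h 0 $ 2 $ 2 \<in> \<real> \<and> Re (h 0 $ 2 $ 2) > 0)"

definition LSU11 :: "(complex \<Rightarrow> mat2) \<Rightarrow> bool" where
  "LSU11 g \<longleftrightarrow> LSL g \<and>
     (\<forall>lam\<in>unit_circle.
        sigma3 ** matrix_inv (transpose (mconj (g (1 / cnj lam)))) ** sigma3 = g lam)"

definition loop_mult :: "(complex \<Rightarrow> mat2) \<Rightarrow> (complex \<Rightarrow> mat2) \<Rightarrow> complex \<Rightarrow> mat2" where
  "loop_mult f g = (\<lambda>lam. f lam ** g lam)"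

definition Iwasawa_e :: "complex set \<Rightarrow> (complex \<Rightarrow> complex \<Rightarrow> mat2) \<Rightarrow> complex set" where
  "Iwasawa_e D C = {z\<in>D. \<exists>F V. LSU11 F \<and> LSL_plus V \<and>
      (\<forall>lam\<in>unit_circle. C z lam = F lam ** V lam)}"

definition Iwasawa_omega :: "complex set \<Rightarrow> (complex \<Rightarrow> complex \<Rightarrow> mat2) \<Rightarrow> complex set" where
  "Iwasawa_omega D C = {z\<in>D. \<exists>F V. LSU11 F \<and> LSL_plus V \<and>
      (\<forall>lam\<in>unit_circle. C z lam = F lam ** omega0 lam ** V lam)}"

definition norm_decomp_e :: "(complex \<Rightarrow> mat2) \<Rightarrow> (complex \<Rightarrow> mat2) \<Rightarrow> (complex \<Rightarrow> mat2) \<Rightarrow> bool" where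
  "norm_decomp_e Cz F V \<longleftrightarrow> LSU11 F \<and> LSL_plus_normalized V \<and>
      (\<forall>lam\<in>unit_circle. Cz lam = F lam ** V lam)"

definition norm_decomp_omega :: "(complex \<Rightarrow> mat2) \<Rightarrow> (complex \<Rightarrow> mat2) \<Rightarrow> (complex \<Rightarrow> mat2) \<Rightarrow> bool" where
  "norm_decomp_omega Cz F V \<longleftrightarrow> LSU11 F \<and> LSL_plus_normalized V \<and>
      (\<forall>lam\<in>unit_circle. Cz lam = F lam ** omega0 lam ** V lam)"

text \<open>Universal cover model: D a nonempty simply connected plane domain (by uniformisation
  the universal cover of a non-compact Riemann surface is the plane or the disk), G the deck
  group: a group of biholomorphic automorphisms of D (extended by the identity off D) acting
  freely and properly discontinuously, with D/G non-compact.\<close>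
definition deck_group :: "complex set \<Rightarrow> (complex \<Rightarrow> complex) set \<Rightarrow> bool" where
  "deck_group D G \<longleftrightarrow>
     id \<in> G \<and> (\<forall>s\<in>G. \<forall>t\<in>G. s \<circ> t \<in> G) \<and> (\<forall>t\<in>G. \<exists>s\<in>G. s \<circ> t = id) \<and>
     (\<forall>t\<in>G. t holomorphic_on D \<and> t ` D = D \<and> (\<forall>z. z \<notin> D \<longrightarrow> t z = z)) \<and>
     (\<forall>z\<in>D. \<exists>U. open U \<and> z \<in> U \<and> U \<subseteq> D \<and> (\<forall>t\<in>G. t \<noteq> id \<longrightarrow> t ` U \<inter> U = {}))"

definition quotient_noncompact :: "complex set \<Rightarrow> (complex \<Rightarrow> complex) set \<Rightarrow> bool" where
  "quotient_noncompact D G \<longleftrightarrow>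
     \<not> (\<exists>K. compact K \<and> K \<subseteq> D \<and> D = (\<Union>t\<in>G. t ` K))"

end

theory Submission
  imports Defs "HOL-Complex_Analysis.Conformal_Mappings"
begin

definition adj2 :: "mat2 \<Rightarrow> mat2" where
  "adj2 A = mk2 (A$2$2) (-A$1$2) (-A$2$1) (A$1$1)"
lemma mk2_nth [simp]:
  "mk2 a b c d $ 1 $ 1 = a" "mk2 a b c d $ 1 $ 2 = b"
  "mk2 a b c d $ 2 $ 1 = c" "mk2 a b c d $ 2 $ 2 = d"
  by (simp_all add: mk2_def)
lemma mat2_eq: "(A::mat2) = B \<longleftrightarrow>
   A$1$1 = B$1$1 \<and> A$1$2 = B$1$2 \<and> A$2$1 = B$2$1 \<and> A$2$2 = B$2$2"
  by (auto simp: vec_eq_iff forall_2)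
lemma mult2: "((A::mat2) ** B)$i$j = A$i$1 * B$1$j + A$i$2 * B$2$j"
  by (simp add: matrix_matrix_mult_def sum_2)
lemma mat1_nth [simp]:
  "(mat 1 :: mat2)$1$1 = 1" "(mat 1 :: mat2)$1$2 = 0"
  "(mat 1 :: mat2)$2$1 = 0" "(mat 1 :: mat2)$2$2 = 1"
  by (simp_all add: mat_def)
definition su :: "mat2 \<Rightarrow> bool" where
  "su A \<longleftrightarrow> A$2$2 = cnj (A$1$1) \<and> A$2$1 = cnj (A$1$2)"

lemma adj2_nth [simp]:
  "adj2 A $ 1 $ 1 = A$2$2" "adj2 A $ 1 $ 2 = - A$1$2"
  "adj2 A $ 2 $ 1 = - A$2$1" "adj2 A $ 2 $ 2 = A$1$1"
  by (simp_all add: adj2_def)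

lemma adj2_right: "det A = 1 \<Longrightarrow> A ** adj2 A = mat 1"
  by (simp add: mat2_eq mult2 det_2 algebra_simps)

lemma adj2_left: "det A = 1 \<Longrightarrow> adj2 A ** A = mat 1"
  by (simp add: mat2_eq mult2 det_2 algebra_simps)

lemma det_adj2: "det (adj2 A) = det A"
  by (simp add: det_2 algebra_simps)

lemma su_mult: "su A \<Longrightarrow> su B \<Longrightarrow> su (A ** B)"
  by (simp add: su_def mult2)

lemma su_adj2: "su A \<Longrightarrow> su (adj2 A)"
  by (simp add: su_def)
lemma minv: assumes "det (B::mat2) = 1" shows "matrix_inv B = adj2 B"
proof -
  have "B ** matrix_inv B = mat 1 \<and> matrix_inv B ** B = mat 1"
    unfolding matrix_inv_def by (rule someI[of _ "adj2 B"]) (simp add: adj2_right adj2_left assms)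
  then have "adj2 B ** (B ** matrix_inv B) = adj2 B" by simp
  then show ?thesis by (simp add: matrix_mul_assoc adj2_left assms)
qed

lemma circle_inv: "lam \<in> unit_circle \<Longrightarrow> 1 / cnj lam = lam"
proof -
  assume "lam \<in> unit_circle"
  then have n: "cmod lam = 1" by (simp add: unit_circle_def)
  have "lam * cnj lam = 1" using complex_norm_square[of lam] n by simp
  moreover have "cnj lam \<noteq> 0" using n by auto
  ultimately show "1 / cnj lam = lam" by (simp add: field_simps)
qed

lemma tmconj_nth [simp]: "transpose (mconj g) $ i $ j = cnj (g $ j $ i)"
  by (simp add: transpose_def mconj_def)

lemma sigma3_nth [simp]:
  "sigma3 $ 1 $ 1 = 1" "sigma3 $ 1 $ 2 = 0" "sigma3 $ 2 $ 1 = 0" "sigma3 $ 2 $ 2 = -1"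
  by (simp_all add: sigma3_def)

lemma su_iff:
  assumes "det (g::mat2) = 1"
  shows "sigma3 ** matrix_inv (transpose (mconj g)) ** sigma3 = g \<longleftrightarrow> su g"
proof -
  have "det (transpose (mconj g)) = cnj (det g)"
    by (simp add: det_2)
  then have d: "det (transpose (mconj g)) = 1" using assms by simp
  have e: "sigma3 ** adj2 (transpose (mconj g)) ** sigma3 =
      mk2 (cnj (g$2$2)) (cnj (g$2$1)) (cnj (g$1$2)) (cnj (g$1$1))"
    by (simp add: mat2_eq mult2)
  show ?thesis
    unfolding minv[OF d] e mat2_eq su_def mk2_nth
    by (metis complex_cnj_cnj)
qed
lemma LSU11_iff: "LSU11 g \<longleftrightarrow> LSL g \<and> (\<forall>lam\<in>unit_circle. su (g lam))"
  unfolding LSU11_def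
  by (metis (no_types, lifting) LSL_def circle_inv su_iff)

lemma sigma3_sq: "sigma3 ** sigma3 = mat 1"
  by (simp add: mat2_eq mult2)

lemma sigma3_sq2: "sigma3 ** (sigma3 ** X) = X"
  by (simp add: matrix_mul_assoc sigma3_sq)

lemma mult_chi: "(A::mat2) ** B = (\<chi> i j. A$i$1 * B$1$j + A$i$2 * B$2$j)"
  by (simp add: vec_eq_iff mult2)

lemma LSL_mult: assumes f: "LSL f" and g: "LSL g" shows "LSL (\<lambda>l. f l ** g l)"
  unfolding LSL_def
proof (intro conjI ballI)
  have cf: "continuous_on unit_circle f" and cg: "continuous_on unit_circle g"
    using f g by (auto simp: LSL_def)
  show "continuous_on unit_circle (\<lambda>l. f l ** g l)"
    unfolding mult_chi
    by (intro continuous_intros continuous_on_component cf cg)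
  fix lam assume l: "lam \<in> unit_circle"
  then have l': "- lam \<in> unit_circle" by (simp add: unit_circle_def)
  show "det (f lam ** g lam) = 1" using f g l by (simp add: det_mul LSL_def)
  have "f (- lam) ** g (- lam) = sigma3 ** f lam ** sigma3 ** (sigma3 ** g lam ** sigma3)"
    using f g l by (simp add: LSL_def)
  also have "\<dots> = sigma3 ** (f lam ** g lam) ** sigma3"
    by (simp add: matrix_mul_assoc[symmetric] sigma3_sq2)
  finally show "f (- lam) ** g (- lam) = sigma3 ** (f lam ** g lam) ** sigma3" .
qed

lemma LSU11_mult: "LSU11 f \<Longrightarrow> LSU11 g \<Longrightarrow> LSU11 (\<lambda>l. f l ** g l)"
  by (simp add: LSU11_iff LSL_mult su_mult)



lemma real_boundary_const:
  fixes f :: "complex \<Rightarrow> complex"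
  assumes cf: "continuous_on (cball 0 1) f" and hf: "f holomorphic_on ball 0 1"
    and re: "\<And>z. z \<in> sphere 0 1 \<Longrightarrow> f z \<in> \<real>" and z: "z \<in> cball 0 1"
  shows "f z = f 0"
proof -
  have im: "Im (f w) = 0" if w: "w \<in> ball 0 1" for w
  proof -
    have "Re (\<i> * f w) \<le> 0"
      apply (rule maximum_real_frontier[where f="\<lambda>z. \<i> * f z" and S="ball 0 1"])
      using cf hf re w by (auto intro!: holomorphic_intros continuous_intros simp: complex_is_Real_iff)
    moreover have "Re (-\<i> * f w) \<le> 0"
      apply (rule maximum_real_frontier[where f="\<lambda>z. -\<i> * f z" and S="ball 0 1"])
      using cf hf re w by (auto intro!: holomorphic_intros continuous_intros simp: complex_is_Real_iff)
    ultimately show ?thesis by simp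
  qed
  have "f constant_on ball 0 1"
  proof (rule ccontr)
    assume "\<not> f constant_on ball 0 1"
    then have "open (f ` ball 0 1)"
      by (intro open_mapping_thm[OF hf]) auto
    moreover have "f 0 \<in> f ` ball 0 1" by simp
    ultimately obtain e where e: "e > 0" "ball (f 0) e \<subseteq> f ` ball 0 1"
      by (meson openE)
    have "f 0 + \<i> * of_real (e/2) \<in> ball (f 0) e" proof -
      have "cmod (\<i> * of_real (e/2)) = e/2" using e unfolding norm_mult by simp
      then show ?thesis using e by (simp add: dist_norm)
    qed
    then have "f 0 + \<i> * of_real (e/2) \<in> f ` ball 0 1" using e(2) by (meson subsetD)
    then obtain w where w: "w \<in> ball 0 1" "f 0 + \<i> * of_real (e/2) = f w" by (rule imageE)
    have "Im (f w) = e/2" unfolding w(2)[symmetric] using im[of 0] by simp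
    with im[OF w(1)] e show False by simp
  qed
  then have "\<And>w. w \<in> ball 0 1 \<Longrightarrow> f w = f 0"
    unfolding constant_on_def by (metis centre_in_ball zero_less_one)
  moreover have "closure (ball (0::complex) 1) = cball 0 1" by (rule closure_ball) simp
  ultimately show ?thesis
    using continuous_constant_on_closure[of "ball 0 1" f "f 0" z] cf z by metis
qed


lemma pair_const:
  fixes a d :: "complex \<Rightarrow> complex"
  assumes ca: "continuous_on (cball 0 1) a" and ha: "a holomorphic_on ball 0 1"
    and cd: "continuous_on (cball 0 1) d" and hd: "d holomorphic_on ball 0 1"
    and rel: "\<And>z. z \<in> sphere 0 1 \<Longrightarrow> d z = cnj (a z)" and z: "z \<in> sphere 0 1"
  shows "a z = a 0 \<and> d z = d 0"
proof -
  have zc: "z \<in> cball 0 1" using z by simp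
  have c1: "continuous_on (cball 0 1) (\<lambda>w. a w + d w)" by (intro continuous_intros ca cd)
  have h1: "(\<lambda>w. a w + d w) holomorphic_on ball 0 1" by (intro holomorphic_intros ha hd)
  have r1: "\<And>w. w \<in> sphere 0 1 \<Longrightarrow> a w + d w \<in> \<real>" using rel by (simp add: complex_is_Real_iff)
  have 1: "a z + d z = a 0 + d 0" by (rule real_boundary_const[OF c1 h1 r1 zc])
  have c2: "continuous_on (cball 0 1) (\<lambda>w. \<i> * (a w - d w))" by (intro continuous_intros ca cd)
  have h2: "(\<lambda>w. \<i> * (a w - d w)) holomorphic_on ball 0 1" by (intro holomorphic_intros ha hd)
  have r2: "\<And>w. w \<in> sphere 0 1 \<Longrightarrow> \<i> * (a w - d w) \<in> \<real>" using rel by (simp add: complex_is_Real_iff)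
  have 2: "\<i> * (a z - d z) = \<i> * (a 0 - d 0)" by (rule real_boundary_const[OF c2 h2 r2 zc])
  then have "a z - d z = a 0 - d 0" by simp
  with 1 show ?thesis by algebra
qed

lemma refl_cont_hol:
  fixes f :: "complex \<Rightarrow> complex"
  assumes "continuous_on (cball 0 1) f" "f holomorphic_on ball 0 1"
  shows "continuous_on (cball 0 1) (\<lambda>w. f (- w))" "(\<lambda>w. f (- w)) holomorphic_on ball 0 1"
proof -
  show "continuous_on (cball 0 1) (\<lambda>w. f (- w))"
    by (rule continuous_on_compose2[OF assms(1)]) (auto intro!: continuous_intros)
  have "(f \<circ> uminus) holomorphic_on ball 0 1"
    by (rule holomorphic_on_compose_gen[OF _ assms(2)]) (auto intro!: holomorphic_intros)
  then show "(\<lambda>w. f (- w)) holomorphic_on ball 0 1" by (simp add: o_def)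
qed

lemma plus_ext_comp:
  assumes "plus_ext g h"
  shows "continuous_on (cball 0 1) (\<lambda>w. h w $ a $ b)" "(\<lambda>w. h w $ a $ b) holomorphic_on ball 0 1"
  using assms unfolding plus_ext_def by (auto intro!: continuous_on_component)

lemma twist0:
  assumes g: "LSL g" and h: "plus_ext g h"
  shows "h 0 $ 1 $ 2 = 0 \<and> h 0 $ 2 $ 1 = 0"
proof -
  have one: "(1::complex) \<in> sphere 0 1" by simp
  have *: "h 0 $ a $ b = 0" if ab: "(sigma3 ** g 1 ** sigma3) $ a $ b = - g 1 $ a $ b"
     "\<And>l. l \<in> unit_circle \<Longrightarrow> (sigma3 ** g l ** sigma3) $ a $ b = - g l $ a $ b" for a b
  proof -
    define f where "f w = h w $ a $ b + h (- w) $ a $ b" for w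
    have cf: "continuous_on (cball 0 1) f" and hf: "f holomorphic_on ball 0 1"
      unfolding f_def using plus_ext_comp[OF h, of a b] refl_cont_hol[of "\<lambda>w. h w $ a $ b"]
      by (auto intro!: continuous_intros holomorphic_intros)
    have z: "f w = 0" if w: "w \<in> sphere 0 1" for w
    proof -
      have w': "w \<in> unit_circle" "- w \<in> unit_circle" using w by (auto simp: unit_circle_def)
      have "h w = g w" "h (- w) = g (- w)" using h w' by (auto simp: plus_ext_def)
      moreover have "g (- w) = sigma3 ** g w ** sigma3" using g w' by (auto simp: LSL_def)
      ultimately show ?thesis unfolding f_def using ab(2)[OF w'(1)] by simp
    qed
    have "f 1 = f 0" by (rule real_boundary_const[OF cf hf]) (use z in auto)
    then show ?thesis using z[OF one] by (simp add: f_def)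
  qed
  show ?thesis
    by (intro conjI *) (simp_all add: mult2)
qed

lemma pos_real_mult:
  fixes x y :: complex
  assumes "x \<in> \<real>" "Re x > 0" "y \<in> \<real>" "Re y > 0"
  shows "x * y \<in> \<real> \<and> Re (x * y) > 0"
  using assms by (auto elim!: Reals_cases)

lemma core:
  assumes V: "LSL_plus_normalized V" and W: "LSL_plus_normalized W"
    and su: "\<And>l. l \<in> unit_circle \<Longrightarrow> su (V l ** adj2 (W l))"
    and lam: "lam \<in> unit_circle"
  shows "V lam ** adj2 (W lam) = mat 1"
proof -
  obtain h where h: "plus_ext V h" "h 0 $ 1 $ 1 \<in> \<real>" "Re (h 0 $ 1 $ 1) > 0"
      "h 0 $ 2 $ 2 \<in> \<real>" "Re (h 0 $ 2 $ 2) > 0" and LV: "LSL V"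
    using V unfolding LSL_plus_normalized_def by blast
  obtain k where k: "plus_ext W k" "k 0 $ 1 $ 1 \<in> \<real>" "Re (k 0 $ 1 $ 1) > 0"
      "k 0 $ 2 $ 2 \<in> \<real>" "Re (k 0 $ 2 $ 2) > 0" and LW: "LSL W"
    using W unfolding LSL_plus_normalized_def by blast
  note hc = plus_ext_comp[OF h(1)] and kc = plus_ext_comp[OF k(1)]
  have h0: "h 0 $ 1 $ 2 = 0" "h 0 $ 2 $ 1 = 0" using twist0[OF LV h(1)] by auto
  have k0: "k 0 $ 1 $ 2 = 0" "k 0 $ 2 $ 1 = 0" using twist0[OF LW k(1)] by auto
  define Y where "Y w = h w ** adj2 (k w)" for w
  have Y11: "Y w $ 1 $ 1 = h w $ 1 $ 1 * k w $ 2 $ 2 + h w $ 1 $ 2 * - k w $ 2 $ 1" for w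
    by (simp add: Y_def mult2)
  have Y12: "Y w $ 1 $ 2 = h w $ 1 $ 1 * - k w $ 1 $ 2 + h w $ 1 $ 2 * k w $ 1 $ 1" for w
    by (simp add: Y_def mult2)
  have Y21: "Y w $ 2 $ 1 = h w $ 2 $ 1 * k w $ 2 $ 2 + h w $ 2 $ 2 * - k w $ 2 $ 1" for w
    by (simp add: Y_def mult2)
  have Y22: "Y w $ 2 $ 2 = h w $ 2 $ 1 * - k w $ 1 $ 2 + h w $ 2 $ 2 * k w $ 1 $ 1" for w
    by (simp add: Y_def mult2)
  have cY: "continuous_on (cball 0 1) (\<lambda>w. Y w $ a $ b)" if "a = 1 \<or> a = 2" "b = 1 \<or> b = 2" for a b
    using that by (elim disjE) (simp_all only: Y11 Y12 Y21 Y22, (intro continuous_intros hc kc)+)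
  have hY: "(\<lambda>w. Y w $ a $ b) holomorphic_on ball 0 1" if "a = 1 \<or> a = 2" "b = 1 \<or> b = 2" for a b
    using that by (elim disjE) (simp_all only: Y11 Y12 Y21 Y22, (intro holomorphic_intros hc kc)+)
  have onc: "Y w = V w ** adj2 (W w)" if "w \<in> sphere 0 1" for w
    using that h(1) k(1) by (simp add: Y_def plus_ext_def unit_circle_def)
  have rel: "Y w $ 2 $ 2 = cnj (Y w $ 1 $ 1) \<and> Y w $ 2 $ 1 = cnj (Y w $ 1 $ 2)" if "w \<in> sphere 0 1" for w
    using su[of w] that onc[OF that] by (simp add: su_def unit_circle_def)
  have lam': "lam \<in> sphere 0 1" using lam by (simp add: unit_circle_def)
  have c1: "Y lam $ 1 $ 1 = Y 0 $ 1 $ 1 \<and> Y lam $ 2 $ 2 = Y 0 $ 2 $ 2"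
    by (rule pair_const[OF cY hY cY hY _ lam']) (use rel in auto)
  have c2: "Y lam $ 1 $ 2 = Y 0 $ 1 $ 2 \<and> Y lam $ 2 $ 1 = Y 0 $ 2 $ 1"
    by (rule pair_const[OF cY hY cY hY _ lam']) (use rel in auto)
  have z12: "Y 0 $ 1 $ 2 = 0" "Y 0 $ 2 $ 1 = 0" unfolding Y12 Y21 using h0 k0 by simp_all
  have p11: "Y 0 $ 1 $ 1 \<in> \<real> \<and> Re (Y 0 $ 1 $ 1) > 0"
    unfolding Y11 using h0 k0 pos_real_mult[OF h(2,3) k(4,5)] by simp
  have p22: "Y 0 $ 2 $ 2 \<in> \<real> \<and> Re (Y 0 $ 2 $ 2) > 0"
    unfolding Y22 using h0 k0 pos_real_mult[OF h(4,5) k(2,3)] by simp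
  have e: "Y 0 $ 2 $ 2 = Y 0 $ 1 $ 1"
    using rel[OF lam'] c1 p11 by (metis Reals_cnj_iff)
  have "det (Y lam) = 1"
    using onc[OF lam'] LV LW lam by (simp add: det_mul det_adj2 LSL_def)
  then have "Y 0 $ 1 $ 1 * Y 0 $ 1 $ 1 = 1"
    using c1 c2 z12 e by (simp add: det_2)
  moreover obtain r where r: "Y 0 $ 1 $ 1 = of_real r" using p11 Reals_cases by blast
  ultimately have "of_real (r * r) = (1::complex)" by simp
  then have "r ^ 2 = 1" by (simp only: of_real_eq_1_iff power2_eq_square)
  moreover have "r > 0" using p11 r by simp
  ultimately have "r = 1" using power2_eq_1_iff[of r] by auto
  then have one: "Y 0 $ 1 $ 1 = 1" using r by simp
  have "Y lam = mat 1"
    using c1 c2 z12 e one by (simp add: mat2_eq)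
  then show ?thesis using onc[OF lam'] by simp
qed
lemma LSL_det: "LSL g \<Longrightarrow> l \<in> unit_circle \<Longrightarrow> det (g l) = 1"
  by (simp add: LSL_def)

lemma LSU11_LSL: "LSU11 g \<Longrightarrow> LSL g" by (simp add: LSU11_def)
lemma LSLpn_LSL: "LSL_plus_normalized g \<Longrightarrow> LSL g" by (simp add: LSL_plus_normalized_def)

lemma case_e:
  assumes N: "LSU11 N" and F: "LSU11 F'" and V: "LSL_plus_normalized V" and W: "LSL_plus_normalized W"
    and eq: "\<And>l. l \<in> unit_circle \<Longrightarrow> F' l ** W l = N l ** V l"
    and lam: "lam \<in> unit_circle"
  shows "F' lam = N lam"
proof -
  have key: "adj2 (N l) ** F' l = V l ** adj2 (W l) \<and> F' l = N l ** (V l ** adj2 (W l))"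
    if l: "l \<in> unit_circle" for l
  proof -
    have dN: "det (N l) = 1" and dW: "det (W l) = 1"
      using LSL_det[OF LSU11_LSL[OF N] l] LSL_det[OF LSLpn_LSL[OF W] l] by auto
    have "F' l = F' l ** (W l ** adj2 (W l))" by (simp add: adj2_right[OF dW])
    also have "\<dots> = N l ** V l ** adj2 (W l)" by (simp add: matrix_mul_assoc eq[OF l])
    finally have 1: "F' l = N l ** V l ** adj2 (W l)" .
    then have "adj2 (N l) ** F' l = (adj2 (N l) ** N l) ** V l ** adj2 (W l)"
      by (simp add: matrix_mul_assoc)
    then show ?thesis using 1 by (simp add: adj2_left[OF dN] matrix_mul_assoc)
  qed
  have "V l ** adj2 (W l) = mat 1" if l: "l \<in> unit_circle" for l
  proof (rule core[OF V W _ l])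
    fix l' assume l': "l' \<in> unit_circle"
    have "su (adj2 (N l') ** F' l')"
      using N F l' by (intro su_mult su_adj2) (auto simp: LSU11_iff)
    then show "su (V l' ** adj2 (W l'))" using conjunct1[OF key[OF l']] by simp
  qed
  then show ?thesis using key[OF lam] lam by simp
qed

lemma omega_conj:
  assumes "l \<noteq> 0"
  shows "omega0 l ** X ** adj2 (omega0 l) =
    mk2 (X$2$2) (- (l * l) * X$2$1) (- (inverse l * inverse l) * X$1$2) (X$1$1)"
  using assms by (simp add: mat2_eq mult2 omega0_def field_simps)

lemma det_omega: "l \<noteq> 0 \<Longrightarrow> det (omega0 l) = 1"
  by (simp add: det_2 omega0_def)

lemma omega_su:
  assumes l: "l \<in> unit_circle" and s: "su (omega0 l ** X ** adj2 (omega0 l))"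
  shows "su X"
proof -
  have l0: "l \<noteq> 0" using l by (auto simp: unit_circle_def)
  have ci: "cnj l = inverse l" using circle_inv[OF l] by (simp add: divide_inverse) (metis inverse_inverse_eq)
  from s have a: "X$1$1 = cnj (X$2$2)" and b: "- (inverse l * inverse l) * X$1$2 = cnj (- (l * l) * X$2$1)"
    unfolding omega_conj[OF l0] su_def by simp_all
  from b have "X$1$2 = cnj (X$2$1)" using l0 by (simp add: ci)
  with a show ?thesis unfolding su_def by (metis complex_cnj_cnj)
qed

lemma case_omega:
  assumes N: "LSU11 N" and F: "LSU11 F'" and V: "LSL_plus_normalized V" and W: "LSL_plus_normalized W"
    and eq: "\<And>l. l \<in> unit_circle \<Longrightarrow> F' l ** omega0 l ** W l = N l ** omega0 l ** V l"
    and lam: "lam \<in> unit_circle"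
  shows "F' lam = N lam"
proof -
  have key: "adj2 (N l) ** F' l = omega0 l ** (V l ** adj2 (W l)) ** adj2 (omega0 l) \<and>
      F' l = N l ** (omega0 l ** (V l ** adj2 (W l)) ** adj2 (omega0 l))"
    if l: "l \<in> unit_circle" for l
  proof -
    have l0: "l \<noteq> 0" using l by (auto simp: unit_circle_def)
    have dN: "det (N l) = 1" and dW: "det (W l) = 1"
      using LSL_det[OF LSU11_LSL[OF N] l] LSL_det[OF LSLpn_LSL[OF W] l] by auto
    have dO: "det (omega0 l) = 1" using det_omega[OF l0] .
    have "F' l = F' l ** (omega0 l ** ((W l ** adj2 (W l)) ** adj2 (omega0 l)))"
      by (simp add: adj2_right[OF dW] adj2_right[OF dO])
    also have "\<dots> = (F' l ** omega0 l ** W l) ** adj2 (W l) ** adj2 (omega0 l)"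
      by (simp add: matrix_mul_assoc)
    also have "\<dots> = N l ** (omega0 l ** (V l ** adj2 (W l)) ** adj2 (omega0 l))"
      by (simp add: matrix_mul_assoc eq[OF l])
    finally have 1: "F' l = N l ** (omega0 l ** (V l ** adj2 (W l)) ** adj2 (omega0 l))" .
    then have "adj2 (N l) ** F' l = (adj2 (N l) ** N l) ** (omega0 l ** (V l ** adj2 (W l)) ** adj2 (omega0 l))"
      by (simp add: matrix_mul_assoc)
    then show ?thesis using 1 by (simp add: adj2_left[OF dN])
  qed
  have "V l ** adj2 (W l) = mat 1" if l: "l \<in> unit_circle" for l
  proof (rule core[OF V W _ l])
    fix l' assume l': "l' \<in> unit_circle"
    have "su (adj2 (N l') ** F' l')"
      using N F l' by (intro su_mult su_adj2) (auto simp: LSU11_iff)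
    then have "su (omega0 l' ** (V l' ** adj2 (W l')) ** adj2 (omega0 l'))"
      using conjunct1[OF key[OF l']] by simp
    then show "su (V l' ** adj2 (W l'))" by (rule omega_su[OF l'])
  qed
  moreover have "det (omega0 lam) = 1" using lam by (intro det_omega) (auto simp: unit_circle_def)
  ultimately show ?thesis using key[OF lam] lam by (simp add: adj2_right)
qed

theorem mainTheorem6:
  fixes D :: "complex set" and G :: "(complex \<Rightarrow> complex) set"
    and A :: "complex \<Rightarrow> complex \<Rightarrow> mat2"
    and C :: "complex \<Rightarrow> complex \<Rightarrow> mat2"
    and rho :: "(complex \<Rightarrow> complex) \<Rightarrow> complex \<Rightarrow> mat2"
    and z0 :: complex
  assumes D: "open D" "connected D" "simply_connected D" "D \<noteq> {}"
    and G: "deck_group D G" "quotient_noncompact D G"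
    \<comment> \<open>eta = A(z,lambda) dz, holomorphic in z and in lambda, sl_2-valued and twisted\<close>
    and A_hol_z: "\<And>lam i j. lam \<noteq> 0 \<Longrightarrow> (\<lambda>z. A z lam $ i $ j) holomorphic_on D"
    and A_hol_lam: "\<And>z i j. z \<in> D \<Longrightarrow> (\<lambda>lam. A z lam $ i $ j) holomorphic_on (- {0})"
    and A_lie: "\<And>z lam. z \<in> D \<Longrightarrow> lam \<noteq> 0 \<Longrightarrow>
        A z lam $ 1 $ 1 + A z lam $ 2 $ 2 = 0 \<and> A z (- lam) = sigma3 ** A z lam ** sigma3"
    \<comment> \<open>invariance of eta under the deck group: tau^* eta = eta\<close>
    and A_inv: "\<And>t z lam i j. t \<in> G \<Longrightarrow> z \<in> D \<Longrightarrow> lam \<noteq> 0 \<Longrightarrow>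
        deriv t z * A (t z) lam $ i $ j = A z lam $ i $ j"
    \<comment> \<open>dC = C eta\<close>
    and C_ode: "\<And>z lam i j. z \<in> D \<Longrightarrow> lam \<noteq> 0 \<Longrightarrow>
        ((\<lambda>w. C w lam $ i $ j) has_field_derivative ((C z lam ** A z lam) $ i $ j)) (at z)"
    and z0: "z0 \<in> D" "LSL (C z0)"
    \<comment> \<open>monodromy\<close>
    and rho: "\<And>t z lam. t \<in> G \<Longrightarrow> z \<in> D \<Longrightarrow> lam \<noteq> 0 \<Longrightarrow> C (t z) lam = rho t lam ** C z lam"
    and rho_SU: "\<And>t. t \<in> G \<Longrightarrow> LSU11 (rho t)"
  shows "(\<forall>t\<in>G. t ` Iwasawa_e D C = Iwasawa_e D C \<and> t ` Iwasawa_omega D C = Iwasawa_omega D C)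
    \<and> (\<forall>t\<in>G. \<forall>z\<in>Iwasawa_e D C. \<forall>F V F' V'.
          norm_decomp_e (C z) F V \<longrightarrow> norm_decomp_e (C (t z)) F' V' \<longrightarrow>
          (\<forall>lam\<in>unit_circle. F' lam = rho t lam ** F lam))
    \<and> (\<forall>t\<in>G. \<forall>z\<in>Iwasawa_omega D C. \<forall>F V F' V'.
          norm_decomp_omega (C z) F V \<longrightarrow> norm_decomp_omega (C (t z)) F' V' \<longrightarrow>
          (\<forall>lam\<in>unit_circle. F' lam ** omega0 lam = rho t lam ** F lam ** omega0 lam))"
  proof -
  have dg: "deck_group D G" by (rule G(1))
  have tD: "t z \<in> D" if "t \<in> G" "z \<in> D" for t z
    using dg that unfolding deck_group_def by blast
  have circ0: "l \<noteq> 0" if "l \<in> unit_circle" for l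
    using that by (auto simp: unit_circle_def)
  have mapE: "t z \<in> Iwasawa_e D C" if t: "t \<in> G" and z: "z \<in> Iwasawa_e D C" for t z
  proof -
    obtain F V where FV: "LSU11 F" "LSL_plus V" "\<forall>lam\<in>unit_circle. C z lam = F lam ** V lam"
      and zD: "z \<in> D" using z unfolding Iwasawa_e_def by blast
    have "\<forall>lam\<in>unit_circle. C (t z) lam = (rho t lam ** F lam) ** V lam"
      using FV(3) rho[OF t zD] circ0 by (simp add: matrix_mul_assoc)
    moreover have "LSU11 (\<lambda>l. rho t l ** F l)" by (rule LSU11_mult[OF rho_SU[OF t] FV(1)])
    ultimately show ?thesis unfolding Iwasawa_e_def using tD[OF t zD] FV(2) by blast
  qed
  have mapO: "t z \<in> Iwasawa_omega D C" if t: "t \<in> G" and z: "z \<in> Iwasawa_omega D C" for t z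
  proof -
    obtain F V where FV: "LSU11 F" "LSL_plus V" "\<forall>lam\<in>unit_circle. C z lam = F lam ** omega0 lam ** V lam"
      and zD: "z \<in> D" using z unfolding Iwasawa_omega_def by blast
    have "\<forall>lam\<in>unit_circle. C (t z) lam = (rho t lam ** F lam) ** omega0 lam ** V lam"
      using FV(3) rho[OF t zD] circ0 by (simp add: matrix_mul_assoc)
    moreover have "LSU11 (\<lambda>l. rho t l ** F l)" by (rule LSU11_mult[OF rho_SU[OF t] FV(1)])
    ultimately show ?thesis unfolding Iwasawa_omega_def using tD[OF t zD] FV(2) by blast
  qed
  have bk: "\<exists>s\<in>G. t (s w) = w" if t: "t \<in> G" and w: "w \<in> D" for t w
  proof -
    obtain s where s: "s \<in> G" "s \<circ> t = id" using dg t unfolding deck_group_def by blast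
    have "w \<in> t ` D" using dg t w unfolding deck_group_def by blast
    then obtain z' where "w = t z'" by blast
    then have "t (s w) = w" using s(2) by (metis comp_apply id_apply)
    then show ?thesis using s(1) by blast
  qed
  have part1: "t ` Iwasawa_e D C = Iwasawa_e D C \<and> t ` Iwasawa_omega D C = Iwasawa_omega D C"
    if t: "t \<in> G" for t
  proof
    show "t ` Iwasawa_e D C = Iwasawa_e D C"
    proof
      show "t ` Iwasawa_e D C \<subseteq> Iwasawa_e D C" using mapE[OF t] by blast
      show "Iwasawa_e D C \<subseteq> t ` Iwasawa_e D C"
      proof
        fix w assume w: "w \<in> Iwasawa_e D C"
        then have "w \<in> D" by (simp add: Iwasawa_e_def)
        then obtain s where s: "s \<in> G" "t (s w) = w" using bk[OF t] by blast
        have "s w \<in> Iwasawa_e D C" by (rule mapE[OF s(1) w])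
        then show "w \<in> t ` Iwasawa_e D C" using s(2) by (metis imageI)
      qed
    qed
    show "t ` Iwasawa_omega D C = Iwasawa_omega D C"
    proof
      show "t ` Iwasawa_omega D C \<subseteq> Iwasawa_omega D C" using mapO[OF t] by blast
      show "Iwasawa_omega D C \<subseteq> t ` Iwasawa_omega D C"
      proof
        fix w assume w: "w \<in> Iwasawa_omega D C"
        then have "w \<in> D" by (simp add: Iwasawa_omega_def)
        then obtain s where s: "s \<in> G" "t (s w) = w" using bk[OF t] by blast
        have "s w \<in> Iwasawa_omega D C" by (rule mapO[OF s(1) w])
        then show "w \<in> t ` Iwasawa_omega D C" using s(2) by (metis imageI)
      qed
    qed
  qed
  have part2: "F' lam = rho t lam ** F lam"
    if t: "t \<in> G" and z: "z \<in> Iwasawa_e D C" and d1: "norm_decomp_e (C z) F V"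
      and d2: "norm_decomp_e (C (t z)) F' V'" and lam: "lam \<in> unit_circle" for t z F V F' V' lam
  proof -
    have zD: "z \<in> D" using z by (simp add: Iwasawa_e_def)
    show ?thesis
    proof (rule case_e[of "\<lambda>l. rho t l ** F l" F' V V' lam])
      show "LSU11 (\<lambda>l. rho t l ** F l)" using d1 rho_SU[OF t] LSU11_mult by (auto simp: norm_decomp_e_def)
      show "LSU11 F'" "LSL_plus_normalized V" "LSL_plus_normalized V'"
        using d1 d2 by (auto simp: norm_decomp_e_def)
      show "lam \<in> unit_circle" by (rule lam)
      fix l assume l: "l \<in> unit_circle"
      have "F' l ** V' l = C (t z) l" using d2 l by (simp add: norm_decomp_e_def)
      also have "\<dots> = rho t l ** C z l" using rho[OF t zD] circ0[OF l] by simp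
      also have "\<dots> = rho t l ** (F l ** V l)" using d1 l by (simp add: norm_decomp_e_def)
      finally show "F' l ** V' l = rho t l ** F l ** V l" by (simp add: matrix_mul_assoc)
    qed
  qed
  have part3: "F' lam ** omega0 lam = rho t lam ** F lam ** omega0 lam"
    if t: "t \<in> G" and z: "z \<in> Iwasawa_omega D C" and d1: "norm_decomp_omega (C z) F V"
      and d2: "norm_decomp_omega (C (t z)) F' V'" and lam: "lam \<in> unit_circle" for t z F V F' V' lam
  proof -
    have zD: "z \<in> D" using z by (simp add: Iwasawa_omega_def)
    have "F' lam = rho t lam ** F lam"
    proof (rule case_omega[of "\<lambda>l. rho t l ** F l" F' V V' lam])
      show "LSU11 (\<lambda>l. rho t l ** F l)" using d1 rho_SU[OF t] LSU11_mult by (auto simp: norm_decomp_omega_def)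
      show "LSU11 F'" "LSL_plus_normalized V" "LSL_plus_normalized V'"
        using d1 d2 by (auto simp: norm_decomp_omega_def)
      show "lam \<in> unit_circle" by (rule lam)
      fix l assume l: "l \<in> unit_circle"
      have "F' l ** omega0 l ** V' l = C (t z) l" using d2 l by (simp add: norm_decomp_omega_def)
      also have "\<dots> = rho t l ** C z l" using rho[OF t zD] circ0[OF l] by simp
      also have "\<dots> = rho t l ** (F l ** omega0 l ** V l)" using d1 l by (simp add: norm_decomp_omega_def)
      finally show "F' l ** omega0 l ** V' l = rho t l ** F l ** omega0 l ** V l" by (simp add: matrix_mul_assoc)
    qed
    then show ?thesis by simp
  qed
  show ?thesis
  proof (intro conjI ballI allI impI)
    fix t assume "t \<in> G"
    then show "t ` Iwasawa_e D C = Iwasawa_e D C" "t ` Iwasawa_omega D C = Iwasawa_omega D C"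
      using part1 by blast+
  next
    fix t z F V F' V' lam
    assume "t \<in> G" "z \<in> Iwasawa_e D C" "norm_decomp_e (C z) F V"
      "norm_decomp_e (C (t z)) F' V'" "lam \<in> unit_circle"
    then show "F' lam = rho t lam ** F lam" by (rule part2)
  next
    fix t z F V F' V' lam
    assume "t \<in> G" "z \<in> Iwasawa_omega D C" "norm_decomp_omega (C z) F V"
      "norm_decomp_omega (C (t z)) F' V'" "lam \<in> unit_circle"
    then show "F' lam ** omega0 lam = rho t lam ** F lam ** omega0 lam" by (rule part3)
  qed
qed

end
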